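(* Let $b\ge0$ be a constant and assume (A1) and (A2). Let $\tilde M=\phi_{\max}\psi_{\max}\big[2+\big(b\max\{\sqrt{d_1}\theta_{\max},\sqrt{d_2}\gamma_{\max}\}/\sqrt2+\sqrt{d_1d_2}\gamma_{\max}\theta_{\max}\big)\phi_{\max}\psi_{\max}\big]$. For any realization of the data with $y_i\in\{0,1\}$: when $\|\theta-\theta_*\|_2\le b/\sqrt2$, for all $\gamma\in\mathbb{R}^{d_2}$ and $\gamma'\in\Gamma$, $$\|\nabla_\theta L_n(\theta,\gamma)-\nabla_\theta L_n(\theta,\gamma')\|_2\le\tilde M\|\gamma-\gamma'\|_2;$$ when $\|\gamma-\gamma_*\|_2\le b/\sqrt2$, for all $\theta\in\mathbb{R}^{d_1}$ and $\theta'\in\Theta$, $$\|\nabla_\gamma L_n(\theta,\gamma)-\nabla_\gamma L_n(\theta',\gamma)\|_2\le\tilde M\|\theta-\theta'\|_2.$$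
   Context: Data $(x_i,s_i,a_i^{(0)},a_i^{(1)},y_i)$, $i=1,\dots,n$, with $y_i\in\{0,1\}$. Known feature maps $\phi$ ($\mathbb{R}^{d_1}$-valued), $\psi_0$ (real), $\psi$ ($\mathbb{R}^{d_2}$-valued). $\sigma_\gamma(x)=\psi_0(x)+\gamma^\top\psi(x)$, $z_i=\phi(s_i,a_i^{(1)})-\phi(s_i,a_i^{(0)})$, $\mu(v)=1/(1+e^{-v})$, $L_n(\theta,\gamma)=-\frac1n\sum_i\{y_i\log\mu(\sigma_\gamma(x_i)\theta^\top z_i)+(1-y_i)\log[1-\mu(\sigma_\gamma(x_i)\theta^\top z_i)]\}$. (A1): $\|\phi(s,a)\|_2\le\phi_{\max}$; the true parameter $\theta_*\in\Theta=\{\theta:\|\theta\|_\infty\le\theta_{\max}\}$. (A2): $\psi_0\not\equiv0$; $\sup_x\|(\psi_0(x),\psi(x)^\top)\|_2\le\psi_{\max}$; the true $\gamma_*\in\Gamma=\{\gamma:\|(1,\gamma^\top)\|_\infty\le\gamma_{\max}\}$. *)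

theory Defs
  imports "HOL-Analysis.Analysis"
begin

definition grad :: "('a::real_inner \<Rightarrow> real) \<Rightarrow> 'a \<Rightarrow> 'a" where
  "grad f x = (THE D. GDERIV f x :> D)"

definition mu :: "real \<Rightarrow> real" where
  "mu v = 1 / (1 + exp (- v))"

definition supnorm :: "real ^ 'd \<Rightarrow> real" where
  "supnorm v = Max (range (\<lambda>i. \<bar>v $ i\<bar>))"

definition Theta :: "real \<Rightarrow> (real ^ 'd1) set" where
  "Theta tmax = {\<theta>. supnorm \<theta> \<le> tmax}"

text \<open>Gamma = {gamma. ||(1, gamma)||_inf <= gmax}\<close>
definition Gamma :: "real \<Rightarrow> (real ^ 'd2) set" where
  "Gamma gmax = {\<gamma>. max 1 (supnorm \<gamma>) \<le> gmax}"

definition sigma ::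
  "('x \<Rightarrow> real) \<Rightarrow> ('x \<Rightarrow> real ^ 'd2) \<Rightarrow> real ^ 'd2 \<Rightarrow> 'x \<Rightarrow> real" where
  "sigma psi0 psi \<gamma> x = psi0 x + \<gamma> \<bullet> psi x"

definition Ln ::
  "nat \<Rightarrow> (nat \<Rightarrow> 'x) \<Rightarrow> (nat \<Rightarrow> 's) \<Rightarrow> (nat \<Rightarrow> 'a) \<Rightarrow> (nat \<Rightarrow> 'a) \<Rightarrow> (nat \<Rightarrow> real)
   \<Rightarrow> ('s \<Rightarrow> 'a \<Rightarrow> real ^ 'd1) \<Rightarrow> ('x \<Rightarrow> real) \<Rightarrow> ('x \<Rightarrow> real ^ 'd2)
   \<Rightarrow> real ^ 'd1 \<Rightarrow> real ^ 'd2 \<Rightarrow> real" where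
  "Ln n x s a0 a1 y phi psi0 psi \<theta> \<gamma> =
     - (1 / real n) * (\<Sum>i<n.
        let v = sigma psi0 psi \<gamma> (x i) * (\<theta> \<bullet> (phi (s i) (a1 i) - phi (s i) (a0 i)))
        in y i * ln (mu v) + (1 - y i) * ln (1 - mu v))"

end

theory Submission
  imports Defs
begin

lemma onepexp_pos: "0 < 1 + exp (x::real)" by (rule add_pos_pos[OF zero_less_one exp_gt_zero])
lemma mu_pos: "0 < mu v" by (simp add: mu_def onepexp_pos)
lemma mu_less1: "mu v < 1"
proof -
  have "exp (- v) > 0" by simp
  then have "1 < 1 + exp (- v)" by linarith
  then show ?thesis unfolding mu_def using onepexp_pos[of "-v"] by (simp add: divide_less_eq_1_pos)
qed
lemma aux1: "(E::real) > 0 \<Longrightarrow> 1 - 1 / (1 + inverse E) = 1 / (1 + inverse (inverse E))"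
  by (simp add: field_simps)
lemma one_minus_mu: "1 - mu v = mu (- v)"
  unfolding mu_def exp_minus using aux1[of "exp v"] by simp
lemma mu_mono: "a \<le> b \<Longrightarrow> mu a \<le> mu b"
  unfolding mu_def by (simp add: frac_le add_pos_pos)
lemma mu_neg_half: "0 \<le> (a::real) \<Longrightarrow> mu (- a) \<le> 1/2"
proof -
  assume "0 \<le> a"
  then have "exp a \<ge> 1" by simp
  then have "2 \<le> 1 + exp a" by linarith
  then show ?thesis unfolding mu_def using onepexp_pos[of a] by (simp add: divide_le_eq)
qed

definition HH :: "real \<Rightarrow> real" where "HH t = t * mu (- t)"

lemma HH_alt: "HH t = t / (1 + exp t)"
  by (simp add: HH_def mu_def)

lemma HH_deriv: "DERIV HH (t::real) :> (1 + exp t - t * exp t) / (1 + exp t)^2"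
proof -
  have p: "1 + exp t \<noteq> 0" using onepexp_pos[of t] by linarith
  have "DERIV (\<lambda>t. t / (1 + exp t)) t :> (1 * (1 + exp t) - t * (0 + exp t)) / ((1 + exp t) * (1 + exp t))"
    by (rule DERIV_divide[OF DERIV_ident DERIV_add[OF DERIV_const DERIV_exp] p])
  moreover have eq: "(1 * (1 + exp t) - t * (0 + exp t)) / ((1 + exp t) * (1 + exp t)) = (1 + exp t - t * exp t) / (1 + exp t)^2"
    by (simp add: power2_eq_square)
  ultimately have "DERIV (\<lambda>t. t / (1 + exp t)) t :> (1 + exp t - t * exp t) / (1 + exp t)^2" by (simp only: eq)
  moreover have "HH = (\<lambda>t. t / (1 + exp t))" using HH_alt by blast
  ultimately show ?thesis by simp
qed

lemma HH_deriv_ge: "(1 + exp (t::real) - t * exp t) / (1 + exp t)^2 \<ge> -1"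
proof -
  have E: "exp t \<ge> 1 + t" by (rule exp_ge_add_one_self)
  have Ep: "exp t > 0" by simp
  have "1 + exp t - t * exp t + (1 + exp t) * (1 + exp t) \<ge> 0"
  proof (cases "t \<le> 0")
    case True 
    then have "t * exp t \<le> 0" using Ep by (simp add: mult_nonpos_nonneg)
    moreover have "(1 + exp t) * (1 + exp t) \<ge> 0" using Ep by simp
    ultimately show ?thesis using Ep by linarith
  next
    case False
    have "t \<le> exp t" using E by linarith
    then have pr: "exp t * exp t \<ge> t * exp t" using Ep by (intro mult_right_mono) auto
    have "1 + exp t - t * exp t + (1 + exp t) * (1 + exp t) = 2 + 3 * exp t + exp t * exp t - t * exp t"
      by (simp add: algebra_simps)
    then show ?thesis using Ep pr by linarith
  qed
  moreover have pos: "(1 + exp t)^2 > 0" using onepexp_pos[of t] by simp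
  ultimately have "-1 * (1 + exp t)^2 \<le> 1 + exp t - t * exp t" by (simp add: power2_eq_square)
  then show ?thesis using pos by (simp add: le_divide_eq)
qed

lemma HH_deriv_le: "(1 + exp (t::real) - t * exp t) / (1 + exp t)^2 \<le> 6/5"
proof -
  have Ep: "exp t > 0" by simp
  have pos: "(1 + exp t)^2 > 0" using onepexp_pos[of t] by simp
  have "1 + exp t - t * exp t \<le> 6/5 * ((1 + exp t) * (1 + exp t))"
  proof (cases "t \<ge> 0")
    case True
    have "t * exp t \<ge> 0" using True Ep by simp
    moreover have "0 \<le> exp t * exp t" using Ep by simp
    moreover have "6/5 * ((1 + exp t) * (1 + exp t)) = 6/5 + 12/5 * exp t + 6/5 * (exp t * exp t)"
      by (simp add: algebra_simps)
    ultimately show ?thesis using Ep by linarith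
  next
    case False
    define s where "s = - t"
    define F where "F = exp s"
    have s0: "s > 0" using False s_def by simp
    have F: "F \<ge> 1 + s + s^2/2" unfolding F_def using exp_lower_Taylor_quadratic[of s] s0 by simp
    have EF: "exp t * F = 1" unfolding F_def s_def by (simp add: exp_minus_inverse)
    have Fp: "F > 0" unfolding F_def by simp
    have sq: "(s - 4)^2 \<ge> 0" by simp
    have k1: "5 * s \<le> F + 7" using F sq by (simp add: power2_eq_square algebra_simps)
    have k2: "5 * s * F \<le> (F + 7) * F" using k1 Fp by (intro mult_right_mono) auto
    have k2': "5 * (s * F) \<le> F * F + 7 * F" using k2 by (simp add: algebra_simps)
    have e1: "6/5 * ((F + 1) * (F + 1)) = 6/5 * (F * F) + 12/5 * F + 6/5" by (simp add: algebra_simps)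
    have e2: "t * F = - (s * F)" using s_def by simp
    have k3: "F * F + F - t * F \<le> 6/5 * ((F + 1) * (F + 1))" unfolding e1 e2 using k2' Fp by linarith
    have FF: "F * F > 0" using Fp by simp
    have "(1 + exp t - t * exp t) * (F * F) = F * F + F - t * F"
      using EF by (simp add: algebra_simps)
    moreover have "(6/5 * ((1 + exp t) * (1 + exp t))) * (F * F) = 6/5 * (((1 + exp t) * F) * ((1 + exp t) * F))"
      by (simp add: algebra_simps)
    moreover have "(1 + exp t) * F = F + 1" using EF by (simp add: algebra_simps)
    ultimately have "(1 + exp t - t * exp t) * (F * F) \<le> (6/5 * ((1 + exp t) * (1 + exp t))) * (F * F)"
      using k3 by (simp only:)
    then show ?thesis using FF by (rule mult_right_le_imp_le)
  qed
  then have "1 + exp t - t * exp t \<le> 6/5 * (1 + exp t)^2" by (simp add: power2_eq_square)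
  then show ?thesis using pos by (simp add: divide_le_eq)
qed

lemma HH_lower_mono: "(u::real) \<le> u' \<Longrightarrow> HH u + u \<le> HH u' + u'"
proof -
  assume a: "u \<le> u'"
  show ?thesis
  proof (rule DERIV_nonneg_imp_nondecreasing[where f = "\<lambda>t. HH t + t", OF a])
    fix x :: real
    show "\<exists>y. DERIV (\<lambda>t. HH t + t) x :> y \<and> y \<ge> 0"
      using DERIV_add[OF HH_deriv[of x] DERIV_ident] HH_deriv_ge[of x] by (intro exI conjI) auto
  qed
qed

lemma HH_upper_mono: "(u::real) \<le> u' \<Longrightarrow> 6/5 * u - HH u \<le> 6/5 * u' - HH u'"
proof -
  assume a: "u \<le> u'"
  show ?thesis
  proof (rule DERIV_nonneg_imp_nondecreasing[where f = "\<lambda>t. 6/5 * t - HH t", OF a])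
    fix x :: real
    have "DERIV (\<lambda>t. 6/5 * t) x :> 6/5 * 1" by (rule DERIV_cmult[OF DERIV_ident])
    from DERIV_diff[OF this HH_deriv[of x]]
    show "\<exists>y. DERIV (\<lambda>t. 6/5 * t - HH t) x :> y \<and> y \<ge> 0"
      using HH_deriv_le[of x] by (intro exI conjI) auto
  qed
qed


lemma HH_lip: "\<bar>HH u - HH u'\<bar> \<le> 6/5 * \<bar>u - u'\<bar>"
proof (cases "u \<le> u'")
  case True
  have "\<bar>u - u'\<bar> = u' - u" using True by simp
  moreover have "HH u - HH u' \<le> 6/5*(u'-u)"
  proof -
    have "HH u - HH u' \<le> u'-u" using True HH_lower_mono[OF True] HH_upper_mono[OF True] by linarith
    moreover have "u'-u \<le> 6/5*(u'-u)" using True by simp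
    ultimately show ?thesis by linarith
  qed
  moreover have "-(6/5*(u'-u)) \<le> HH u - HH u'"
  proof -
    have "6/5*(u'-u) = 6/5*u' - 6/5*u" by (simp add: right_diff_distrib)
    then show ?thesis using True HH_lower_mono[OF True] HH_upper_mono[OF True] by linarith
  qed
  ultimately show ?thesis by (metis abs_leI minus_le_iff)
next
  case False
  then have F: "u' \<le> u" by simp
  have "\<bar>u - u'\<bar> = u - u'" using F by simp
  moreover have "HH u - HH u' \<le> 6/5*(u-u')"
  proof -
    have "6/5*(u-u') = 6/5*u - 6/5*u'" by (simp add: right_diff_distrib)
    then have "HH u - HH u' \<le> 6/5*(u-u')" using F HH_lower_mono[OF F] HH_upper_mono[OF F] by linarith
    moreover have "6/5*(u-u') \<le> 6/5*(u-u')" using F by simp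
    ultimately show ?thesis by linarith
  qed
  moreover have "-(6/5*(u-u')) \<le> HH u - HH u'"
  proof -
    have "6/5*(u-u') = 6/5*u - 6/5*u'" by (simp add: right_diff_distrib)
    then show ?thesis using F HH_lower_mono[OF F] HH_upper_mono[OF F] by linarith
  qed
  ultimately show ?thesis by (metis abs_leI minus_le_iff)
qed

lemma HH_diff: "HH u - HH u' = (u - u') * mu (- u) + u' * (mu (- u) - mu (- u'))"
  unfolding HH_def by (simp add: algebra_simps)

lemma HH_U1a: "0 \<le> u' \<Longrightarrow> u' \<le> u \<Longrightarrow> HH u - HH u' \<le> u - u'"
proof -
  assume a: "0 \<le> u'" "u' \<le> u"
  have m: "mu (- u) \<le> mu (- u')" using a by (intro mu_mono) simp
  have "u' * (mu (- u) - mu (- u')) \<le> 0" using a m by (simp add: mult_nonneg_nonpos)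
  moreover have "(u - u') * mu (- u) \<le> (u - u') * 1" using a mu_less1[of "-u"] by (intro mult_left_mono) auto
  ultimately show ?thesis unfolding HH_diff by simp
qed

lemma HH_U1b: "0 \<le> u' \<Longrightarrow> u \<le> u' \<Longrightarrow> HH u' - HH u \<le> u' - u"
proof -
  assume a: "0 \<le> u'" "u \<le> u'"
  have m: "mu (- u') \<le> mu (- u)" using a by (intro mu_mono) simp
  have e: "HH u' - HH u = (u' - u) * mu (- u) + u' * (mu (- u') - mu (- u))"
    unfolding HH_def by (simp add: algebra_simps)
  have "u' * (mu (- u') - mu (- u)) \<le> 0" using a m by (simp add: mult_nonneg_nonpos)
  moreover have "(u' - u) * mu (- u) \<le> (u' - u) * 1" using a mu_less1[of "-u"] by (intro mult_left_mono) auto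
  ultimately show ?thesis unfolding e by simp
qed

lemma mu_key2: "- a \<le> u \<Longrightarrow> mu u - mu (- a) \<le> (u + a) * mu u"
proof -
  assume au: "- a \<le> u"
  define z where "z = u + a"
  define X where "X = exp (- u)"
  define Y where "Y = exp a"
  have z0: "z \<ge> 0" using au z_def by simp
  have Xp: "X > 0" and Yp: "Y > 0" unfolding X_def Y_def by simp_all
  have XY: "X = Y * exp (- z)" unfolding X_def Y_def z_def by (simp add: exp_add[symmetric])
  have ez: "exp (- z) \<ge> 1 - z" using exp_ge_add_one_self[of "-z"] by simp
  have h1: "Y - X \<le> Y * z"
  proof -
    have "Y * (1 - z) \<le> Y * exp (- z)" using ez Yp by (intro mult_left_mono) auto
    then show ?thesis unfolding XY by (simp add: algebra_simps)
  qed
  have h2: "Y * z \<le> (1 + Y) * z" using z0 by (simp add: algebra_simps)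
  have h3: "Y - X \<le> (1 + Y) * z" using h1 h2 by linarith
  have muu: "mu u = 1 / (1 + X)" unfolding mu_def X_def by simp
  have mua: "mu (- a) = 1 / (1 + Y)" unfolding mu_def Y_def by simp
  have pX: "1 + X > 0" and pY: "1 + Y > 0" using Xp Yp by simp_all
  have "mu u - mu (- a) = (Y - X) / ((1 + X) * (1 + Y))" unfolding muu mua using pX pY
    by (simp add: field_simps)
  also have "\<dots> \<le> ((1 + Y) * z) / ((1 + X) * (1 + Y))" using h3 pX pY
    by (intro divide_right_mono) auto
  also have "\<dots> = (z * (1 + Y)) / ((1 + X) * (1 + Y))" by (simp add: mult.commute)
  also have "\<dots> = z / (1 + X)" using pY by (intro nonzero_mult_divide_mult_cancel_right) simp
  also have "\<dots> = z * (1 / (1 + X))" by simp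
  finally show ?thesis unfolding muu z_def .
qed

lemma HH_U2: "0 < a \<Longrightarrow> a \<le> 1 \<Longrightarrow> - a \<le> u \<Longrightarrow> HH u - HH (- a) \<le> (1 + a/5) * (u + a)"
proof -
  assume a0: "0 < a" and a1: "a \<le> 1" and au: "- a \<le> u"
  define p where "p = mu u"
  define q where "q = mu (- a)"
  have p0: "p > 0" unfolding p_def by (rule mu_pos)
  have q0: "q > 0" unfolding q_def by (rule mu_pos)
  have e: "HH u - HH (- a) = (u + a) - u * p - a * q"
  proof -
    have e1: "mu (- u) = 1 - mu u" using one_minus_mu[of u] by simp
    have e2: "mu a = 1 - mu (- a)" using one_minus_mu[of "-a"] by simp
    show ?thesis unfolding HH_def p_def q_def e1 minus_minus e2 by (simp add: algebra_simps)
  qed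
  have R: "(1 + a/5) * (u + a) = (u + a) + a/5 * (u + a)" by (simp add: algebra_simps)
  have R0: "a/5 * (u + a) \<ge> 0" using a0 au by simp
  show ?thesis
  proof (cases "u \<ge> 0")
    case True
    have "u * p \<ge> 0" "a * q \<ge> 0" using True p0 q0 a0 by simp_all
    then show ?thesis unfolding e R using R0 by linarith
  next
    case False
    have k: "p - q \<le> (u + a) * p" unfolding p_def q_def by (rule mu_key2[OF au])
    have "a * (p - q) \<le> a * ((u + a) * p)" using k a0 by (intro mult_left_mono) auto
    also have "\<dots> \<le> 1 * ((u + a) * p)" using a1 au p0 by (intro mult_right_mono) auto
    finally have "a * (p - q) \<le> (u + a) * p" by simp
    then have "- u * p - a * q \<le> 0" by (simp add: algebra_simps)
    then show ?thesis unfolding e R using R0 by linarith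
  qed
qed


lemma ln_lower: "1 \<le> (x::real) \<Longrightarrow> 2*(x-1)/(x+1) \<le> ln x"
proof -
  assume x1: "1 \<le> x"
  have "(\<lambda>y. ln y - 2*(y-1)/(y+1)) 1 \<le> (\<lambda>y. ln y - 2*(y-1)/(y+1)) x"
  proof (rule DERIV_nonneg_imp_nondecreasing[OF x1])
    fix y :: real assume y: "1 \<le> y" "y \<le> x"
    have y0: "0 < y" using y by simp
    have yp: "y + 1 \<noteq> 0" using y by simp
    have d1: "DERIV ln y :> inverse y" using y0 by (rule DERIV_ln)
    have d2: "DERIV (\<lambda>y. 2*(y-1)/(y+1)) y :> (2*(1-0)*(y+1) - 2*(y-1)*(1+0))/((y+1)*(y+1))"
      by (rule DERIV_divide[OF DERIV_cmult[OF DERIV_diff[OF DERIV_ident DERIV_const]] DERIV_add[OF DERIV_ident DERIV_const] yp])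
    have e: "(2*(1-0)*(y+1) - 2*(y-1)*(1+0))/((y+1)*(y+1)) = 4 / ((y+1)*(y+1))"
      by (simp add: algebra_simps)
    have nn: "inverse y - 4 / ((y+1)*(y+1)) \<ge> 0"
    proof -
      have sq: "(y - 1) * (y - 1) \<ge> 0" by simp
      have "4 * y \<le> (y+1)*(y+1)" using sq by (simp add: algebra_simps)
      then have "4 / ((y+1)*(y+1)) \<le> 1 / y" using y0 by (simp add: field_simps)
      then show ?thesis by (simp add: inverse_eq_divide)
    qed
    show "\<exists>d. DERIV (\<lambda>y. ln y - 2*(y-1)/(y+1)) y :> d \<and> 0 \<le> d"
      using DERIV_diff[OF d1 d2] nn unfolding e by blast
  qed
  then show ?thesis by simp
qed

lemma exp3_le: "exp (3::real) \<le> 27"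
proof -
  have "exp (3::real) = exp 1 ^ 3" using exp_of_nat_mult[of 3 1] by simp
  also have "\<dots> \<le> 3 ^ 3" using exp_le by (intro power_mono) auto
  finally show ?thesis by simp
qed

lemma HH_U3: "0 < a \<Longrightarrow> a \<le> 1 \<Longrightarrow> u \<le> - a \<Longrightarrow> HH (- a) - HH u \<le> (1 + a/5) * (- a - u)"
proof -
  assume a0: "0 < a" and a1: "a \<le> 1" and au: "u \<le> - a"
  define s where "s = - u"
  define t where "t = s - a"
  define p where "p = mu (- s)"
  define q where "q = mu (- a)"
  have t0: "t \<ge> 0" using au s_def t_def by simp
  have p0: "p > 0" unfolding p_def by (rule mu_pos)
  have q0: "q > 0" unfolding q_def by (rule mu_pos)
  have qh: "q \<le> 1/2" unfolding q_def using a0 by (intro mu_neg_half) simp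
  have pq: "p \<le> q" unfolding p_def q_def using au s_def by (intro mu_mono) simp
  have e: "HH (- a) - HH u = t + a * q - s * p"
  proof -
    have e1: "mu s = 1 - mu (- s)" using one_minus_mu[of "-s"] by simp
    have e2: "mu a = 1 - mu (- a)" using one_minus_mu[of "-a"] by simp
    have "u = - s" using s_def by simp
    then show ?thesis unfolding HH_def p_def q_def t_def by (simp add: e1 e2 algebra_simps)
  qed
  have R: "(1 + a/5) * (- a - u) = t + a/5 * t" unfolding t_def s_def by (simp add: field_simps)
  have G: "a * (q - p) \<le> t * (p + a/5)"
  proof (cases "t \<ge> 5/2")
    case True
    have "a * (q - p) \<le> a * (1/2)" using qh p0 a0 by (intro mult_left_mono) auto
    also have "\<dots> \<le> a/5 * t" using True a0 by simp
    also have "\<dots> \<le> t * (p + a/5)" using p0 t0 by (simp add: algebra_simps)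
    finally show ?thesis .
  next
    case False
    have ratio: "q \<le> exp t * p"
    proof -
      define A where "A = exp a"
      have Ap: "A > 0" unfolding A_def by simp
      have ES: "exp s = exp t * A" unfolding A_def t_def by (simp add: exp_add[symmetric])
      have et1: "exp t \<ge> 1" using t0 by simp
      have "1 + exp t * A \<le> exp t * (1 + A)" using et1 by (simp add: algebra_simps)
      then have "1 / (1 + A) \<le> exp t / (1 + exp t * A)" using Ap et1
        by (simp add: field_simps add_pos_pos)
      then show ?thesis unfolding q_def p_def mu_def A_def[symmetric] ES[symmetric]
        by (simp add: A_def)
    qed
    define X where "X = q / p"
    have X1: "X \<ge> 1" unfolding X_def using pq p0 by simp
    have Xt: "X \<le> exp t" unfolding X_def using ratio p0 by (simp add: divide_le_eq mult.commute)
    have lnX: "ln X \<le> t" using Xt X1 by (metis exp_gt_zero less_le_trans ln_exp ln_le_cancel_iff zero_less_one)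
    have "2*(X-1)/(X+1) \<le> t" using ln_lower[OF X1] lnX by linarith
    then have "2*(X-1) \<le> t*(X+1)" using X1 by (simp add: pos_divide_le_eq)
    then have "2*(X-1)*p \<le> t*(X+1)*p" using p0 by (intro mult_right_mono) auto
    moreover have Xp: "X * p = q" unfolding X_def using p0 by simp
    moreover have "2*(X-1)*p = 2*(X*p) - 2*p" "t*(X+1)*p = t*(X*p) + t*p" by (simp_all add: algebra_simps)
    ultimately have "2*(X*p) - 2*p \<le> t*(X*p) + t*p" by linarith
    then have "2*q - 2*p \<le> t*q + t*p" unfolding Xp .
    then have k: "2*(q-p) \<le> t*(q+p)" by (simp add: algebra_simps)
    have m: "a * (q + p) \<le> 2 * p + 2 * a / 5"
    proof (cases "a \<ge> 1/2")
      case True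
      have "exp a \<ge> 1 + a" by (rule exp_ge_add_one_self)
      then have "1 + exp a \<ge> 5/2" using True by linarith
      then have "q \<le> 2/5" unfolding q_def mu_def by (simp add: divide_le_eq)
      then have "a * q \<le> a * (2/5)" using a0 by (intro mult_left_mono) auto
      moreover have "a * p \<le> 2 * p" using a1 p0 by (intro mult_right_mono) auto
      ultimately show ?thesis by (simp add: algebra_simps)
    next
      case False
      have s3: "s \<le> 3" using \<open>\<not> t \<ge> 5/2\<close> False t_def by simp
      have "exp s \<le> 27" using exp3_le s3 by (meson exp_le_cancel_iff order_trans)
      then have "p \<ge> 1/28" unfolding p_def mu_def by (simp add: field_simps add_pos_pos)
      moreover have "a * q \<le> a * (1/2)" using qh a0 by (intro mult_left_mono) auto
      moreover have "a * p \<le> 1/2 * p" using False p0 by (intro mult_right_mono) auto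
      moreover have "a * (q + p) = a * q + a * p" by (simp add: distrib_left)
      ultimately show ?thesis using False a0 by linarith
    qed
    have "a * (q - p) * 2 = a * (2 * (q - p))" by simp
    also have "\<dots> \<le> a * (t * (q + p))" using k a0 by (intro mult_left_mono) auto
    also have "\<dots> = t * (a * (q + p))" by (simp add: algebra_simps)
    also have "\<dots> \<le> t * (2 * p + 2 * a / 5)" using m t0 by (intro mult_left_mono) auto
    also have "\<dots> = t * (p + a/5) * 2" by (simp add: algebra_simps)
    finally show ?thesis by simp
  qed
  have "a * q - s * p = a * (q - p) - t * p" unfolding t_def by (simp add: algebra_simps)
  then have "a * q - s * p \<le> a/5 * t" using G by (simp add: algebra_simps)
  then show ?thesis unfolding e R by linarith
qed


lemma HH_key: "\<bar>HH u - HH u'\<bar> \<le> (1 + \<bar>u'\<bar>/5) * \<bar>u - u'\<bar>"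
proof -
  define K where "K = 1 + \<bar>u'\<bar>/5"
  have K1: "K \<ge> 1" unfolding K_def by simp
  have d0: "\<bar>u - u'\<bar> \<ge> 0" by simp
  have one: "\<bar>u - u'\<bar> \<le> K * \<bar>u - u'\<bar>" using K1 d0 by (simp add: mult_le_cancel_right1)
  have main: "\<bar>HH u - HH u'\<bar> \<le> K * \<bar>u - u'\<bar>"
  proof (cases "\<bar>u'\<bar> \<ge> 1")
    case True
    then have "6/5 \<le> K" unfolding K_def by simp
    then have "6/5 * \<bar>u - u'\<bar> \<le> K * \<bar>u - u'\<bar>" using d0 by (intro mult_right_mono) auto
    then show ?thesis using HH_lip[of u u'] by linarith
  next
    case False
    show ?thesis
    proof (cases "u' \<le> u")
      case True
      have ab: "\<bar>u - u'\<bar> = u - u'" using True by simp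
      have lo: "-(HH u - HH u') \<le> u - u'" using HH_lower_mono[OF True] by linarith
      have up: "HH u - HH u' \<le> K * (u - u')"
      proof (cases "u' \<ge> 0")
        case True
        then show ?thesis using HH_U1a[OF True \<open>u' \<le> u\<close>] one[unfolded ab] by linarith
      next
        case neg: False
        define a where "a = - u'"
        have a0: "0 < a" and a1: "a \<le> 1" using neg False a_def by auto
        have Ka: "K = 1 + a/5" unfolding K_def a_def using neg by simp
        have "HH u - HH (- a) \<le> (1 + a/5) * (u + a)" using HH_U2[OF a0 a1] True a_def by simp
        then show ?thesis unfolding Ka a_def by simp
      qed
      show ?thesis unfolding ab using lo up one[unfolded ab] by (intro abs_leI) linarith+
    next
      case nle: False
      then have le: "u \<le> u'" by simp
      have ab: "\<bar>u - u'\<bar> = u' - u" using le by simp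
      have lo: "HH u - HH u' \<le> u' - u" using HH_lower_mono[OF le] by linarith
      have up: "-(HH u - HH u') \<le> K * (u' - u)"
      proof (cases "u' \<ge> 0")
        case True
        then show ?thesis using HH_U1b[OF True le] one[unfolded ab] by linarith
      next
        case neg: False
        define a where "a = - u'"
        have a0: "0 < a" and a1: "a \<le> 1" using neg False a_def by auto
        have Ka: "K = 1 + a/5" unfolding K_def a_def using neg by simp
        have "HH (- a) - HH u \<le> (1 + a/5) * (- a - u)" using HH_U3[OF a0 a1] le a_def by simp
        then show ?thesis unfolding Ka a_def by simp
      qed
      show ?thesis unfolding ab using lo up one[unfolded ab] by (intro abs_leI) linarith+
    qed
  qed
  then show ?thesis unfolding K_def .
qed


lemma scal_lip:
  assumes y: "y \<in> {0, 1::real}"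
  shows "\<bar>(y - mu (c * w)) * c - (y - mu (c' * w)) * c'\<bar> \<le> (1 + \<bar>c'\<bar> * \<bar>w\<bar> / 5) * \<bar>c - c'\<bar>"
proof (cases "w = 0")
  case True
  have m0: "mu 0 = 1/2" unfolding mu_def by simp
  have "\<bar>(y - mu (c * w)) * c - (y - mu (c' * w)) * c'\<bar> = \<bar>y - 1/2\<bar> * \<bar>c - c'\<bar>"
  proof -
    have h: "mu (c * w) = 1/2" "mu (c' * w) = 1/2" using True m0 by simp_all
    have "(y - mu (c * w)) * c - (y - mu (c' * w)) * c' = (y - 1/2) * (c - c')"
      unfolding h by (rule right_diff_distrib[symmetric])
    then show ?thesis by (simp add: abs_mult)
  qed
  also have "\<dots> \<le> 1 * \<bar>c - c'\<bar>" using y by (intro mult_right_mono) auto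
  also have "\<dots> \<le> (1 + \<bar>c'\<bar> * \<bar>w\<bar> / 5) * \<bar>c - c'\<bar>" by (intro mult_right_mono) auto
  finally show ?thesis .
next
  case False
  define E where "E = (y - mu (c * w)) * c - (y - mu (c' * w)) * c'"
  have wp: "\<bar>w\<bar> > 0" using False by simp
  have key: "\<bar>E\<bar> * \<bar>w\<bar> \<le> ((1 + \<bar>c'\<bar> * \<bar>w\<bar> / 5) * \<bar>c - c'\<bar>) * \<bar>w\<bar>"
  proof -
    have R: "(1 + \<bar>c' * w\<bar>/5) * \<bar>c * w - c' * w\<bar> = ((1 + \<bar>c'\<bar> * \<bar>w\<bar> / 5) * \<bar>c - c'\<bar>) * \<bar>w\<bar>"
    proof -
      have a1: "\<bar>c' * w\<bar> = \<bar>c'\<bar> * \<bar>w\<bar>" by (rule abs_mult)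
      have a2: "\<bar>c * w - c' * w\<bar> = \<bar>c - c'\<bar> * \<bar>w\<bar>" by (simp add: left_diff_distrib[symmetric] abs_mult)
      show ?thesis unfolding a1 a2 by (simp only: mult.assoc)
    qed
    show ?thesis
    proof (cases "y = 1")
      case True
      have "E * w = HH (c * w) - HH (c' * w)"
        unfolding E_def HH_def True one_minus_mu by (simp add: algebra_simps)
      then have "\<bar>E\<bar> * \<bar>w\<bar> = \<bar>HH (c * w) - HH (c' * w)\<bar>" by (simp add: abs_mult[symmetric])
      also have "\<dots> \<le> (1 + \<bar>c' * w\<bar>/5) * \<bar>c * w - c' * w\<bar>" by (rule HH_key)
      finally show ?thesis unfolding R .
    next
      case False
      then have y0: "y = 0" using y by simp
      have "E * w = HH (- (c * w)) - HH (- (c' * w))"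
        unfolding E_def HH_def y0 by (simp add: algebra_simps)
      then have "\<bar>E\<bar> * \<bar>w\<bar> = \<bar>HH (- (c * w)) - HH (- (c' * w))\<bar>" by (simp add: abs_mult[symmetric])
      also have "\<dots> \<le> (1 + \<bar>- (c' * w)\<bar>/5) * \<bar>- (c * w) - - (c' * w)\<bar>" by (rule HH_key)
      also have "\<dots> = (1 + \<bar>c' * w\<bar>/5) * \<bar>c * w - c' * w\<bar>" by (simp add: abs_minus_commute)
      finally show ?thesis unfolding R .
    qed
  qed
  then show ?thesis unfolding E_def[symmetric] using wp by (simp add: mult_le_cancel_right)
qed



lemma supnorm_ge: "\<bar>v $ i\<bar> \<le> supnorm v"
  unfolding supnorm_def by (rule Max_ge) auto

lemma supnorm_nonneg: "0 \<le> supnorm v"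
  using supnorm_ge[of v undefined] by linarith

lemma norm_le_supnorm: "norm (v :: real ^ 'd) \<le> sqrt (real CARD('d)) * supnorm v"
proof -
  have "norm v = sqrt (\<Sum>i\<in>UNIV. (v $ i)\<^sup>2)" unfolding norm_vec_def L2_set_def by simp
  also have "\<dots> \<le> sqrt (\<Sum>i\<in>(UNIV::'d set). (supnorm v)\<^sup>2)"
  proof -
    have "\<And>i. (v $ i)\<^sup>2 \<le> (supnorm v)\<^sup>2"
    proof -
      fix i
      have "\<bar>v $ i\<bar>\<^sup>2 \<le> (supnorm v)\<^sup>2" using supnorm_ge[of v i] by (intro power_mono) auto
      then show "(v $ i)\<^sup>2 \<le> (supnorm v)\<^sup>2" by simp
    qed
    then show ?thesis by (intro real_sqrt_le_mono sum_mono) auto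
  qed
  also have "\<dots> = sqrt (real CARD('d) * (supnorm v)\<^sup>2)" by simp
  also have "\<dots> = sqrt (real CARD('d)) * supnorm v" using supnorm_nonneg[of v] by (simp add: real_sqrt_mult)
  finally show ?thesis .
qed

lemma grad_eq: "GDERIV f x :> D \<Longrightarrow> grad f x = D"
proof -
  assume g: "GDERIV f x :> D"
  show ?thesis unfolding grad_def
  proof (rule the_equality)
    show "GDERIV f x :> D" by (rule g)
  next
    fix D' assume g': "GDERIV f x :> D'"
    have "(\<lambda>h. h \<bullet> D') = (\<lambda>h. h \<bullet> D)"
      using has_derivative_unique[OF g'[unfolded gderiv_def] g[unfolded gderiv_def]] .
    then have "(D' - D) \<bullet> D' = (D' - D) \<bullet> D" by metis
    then have "(D' - D) \<bullet> (D' - D) = 0" by (simp add: inner_diff_right)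
    then show "D' = D" by simp
  qed
qed

definition lg :: "real \<Rightarrow> real" where "lg v = ln (1 + exp v)"

lemma lg_deriv: "DERIV lg v :> mu v"
proof -
  have p: "0 < 1 + exp v" by (rule onepexp_pos)
  have "DERIV (\<lambda>v. ln (1 + exp v)) v :> inverse (1 + exp v) * (0 + exp v)"
    by (rule DERIV_chain2[OF DERIV_ln[OF p] DERIV_add[OF DERIV_const DERIV_exp]])
  moreover have "inverse (1 + exp v) * (0 + exp v) = mu v"
  proof -
    have "exp (- v) * exp v = 1" by (simp add: exp_add[symmetric])
    then have "(1 + exp (- v)) * exp v = 1 + exp v" by (simp add: algebra_simps)
    then show ?thesis unfolding mu_def using p onepexp_pos[of "-v"]
      by (simp add: field_simps)
  qed
  ultimately show ?thesis unfolding lg_def[abs_def] by simp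
qed

definition ell :: "real \<Rightarrow> real \<Rightarrow> real" where
  "ell y v = y * ln (mu v) + (1 - y) * ln (1 - mu v)"

lemma ln_mu: "ln (mu v) = - lg (- v)"
  unfolding mu_def lg_def using onepexp_pos[of "-v"] by (simp add: ln_div)

lemma ell_alt: "ell y v = - y * lg (- v) - (1 - y) * lg v"
  unfolding ell_def one_minus_mu ln_mu by simp

lemma ell_deriv: "DERIV (ell y) v :> y - mu v"
proof -
  have d1: "DERIV (\<lambda>v. lg (- v)) v :> mu (- v) * (- 1)"
    by (rule DERIV_chain2[OF lg_deriv DERIV_minus[OF DERIV_ident]])
  have "DERIV (\<lambda>v. - y * lg (- v) - (1 - y) * lg v) v :> - y * (mu (- v) * (- 1)) - (1 - y) * mu v"
    by (rule DERIV_diff[OF DERIV_cmult[OF d1] DERIV_cmult[OF lg_deriv]])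
  moreover have "- y * (mu (- v) * (- 1)) - (1 - y) * mu v = y - mu v"
  proof -
    have h: "mu (- v) = 1 - mu v" using one_minus_mu[of v] by simp
    show ?thesis unfolding h by (simp add: algebra_simps)
  qed
  moreover have "ell y = (\<lambda>v. - y * lg (- v) - (1 - y) * lg v)" using ell_alt by blast
  ultimately show ?thesis by simp
qed

lemma ell_affine_deriv:
  "((\<lambda>t. ell y (t \<bullet> A + B)) has_derivative (\<lambda>h. h \<bullet> ((y - mu (x \<bullet> A + B)) *\<^sub>R A))) (at x)"
proof -
  have g: "GDERIV (\<lambda>t. t \<bullet> A + B) x :> A"
    unfolding gderiv_def by (auto intro!: derivative_eq_intros)
  have "GDERIV (\<lambda>t. ell y (t \<bullet> A + B)) x :> (y - mu (x \<bullet> A + B)) *\<^sub>R A"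
    by (rule GDERIV_DERIV_compose[OF g ell_deriv])
  then show ?thesis unfolding gderiv_def .
qed


lemma sum_grad:
  fixes D :: "nat \<Rightarrow> 'v::real_inner"
  assumes "\<And>i. i < n \<Longrightarrow> (f i has_derivative (\<lambda>h. h \<bullet> D i)) (at x)"
  shows "GDERIV (\<lambda>t. c * (\<Sum>i<n. f i t)) x :> c *\<^sub>R (\<Sum>i<n. D i)"
proof -
  have "((\<lambda>t. \<Sum>i<n. f i t) has_derivative (\<lambda>h. \<Sum>i<n. h \<bullet> D i)) (at x)"
    using assms by (intro has_derivative_sum) auto
  then have "((\<lambda>t. c * (\<Sum>i<n. f i t)) has_derivative (\<lambda>h. c * (\<Sum>i<n. h \<bullet> D i))) (at x)"
    by (rule has_derivative_mult_right)
  moreover have "(\<lambda>h. c * (\<Sum>i<n. h \<bullet> D i)) = (\<lambda>h. h \<bullet> (c *\<^sub>R (\<Sum>i<n. D i)))"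
    by (simp add: inner_sum_right)
  ultimately show ?thesis unfolding gderiv_def by simp
qed

lemma Ln_ell: "Ln n x s a0 a1 y phi psi0 psi \<theta> \<gamma> =
   - (1 / real n) * (\<Sum>i<n. ell (y i) (sigma psi0 psi \<gamma> (x i) * (\<theta> \<bullet> (phi (s i) (a1 i) - phi (s i) (a0 i)))))"
  unfolding Ln_def ell_def Let_def by simp

lemma grad_theta:
  "grad (\<lambda>t. Ln n x s a0 a1 y phi psi0 psi t \<gamma>) \<theta> =
     - (1 / real n) *\<^sub>R (\<Sum>i<n. ((y i - mu (sigma psi0 psi \<gamma> (x i) * (\<theta> \<bullet> (phi (s i) (a1 i) - phi (s i) (a0 i)))))
        * sigma psi0 psi \<gamma> (x i)) *\<^sub>R (phi (s i) (a1 i) - phi (s i) (a0 i)))"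
proof -
  define z where "z i = phi (s i) (a1 i) - phi (s i) (a0 i)" for i
  define sg where "sg i = sigma psi0 psi \<gamma> (x i)" for i
  have "GDERIV (\<lambda>t. - (1 / real n) * (\<Sum>i<n. ell (y i) (sg i * (t \<bullet> z i)))) \<theta> :>
      - (1 / real n) *\<^sub>R (\<Sum>i<n. ((y i - mu (sg i * (\<theta> \<bullet> z i))) * sg i) *\<^sub>R z i)"
  proof (rule sum_grad)
    fix i
    have e1: "(\<lambda>t. ell (y i) (sg i * (t \<bullet> z i))) = (\<lambda>t. ell (y i) (t \<bullet> (sg i *\<^sub>R z i) + 0))"
      by simp
    have e2: "(y i - mu (\<theta> \<bullet> (sg i *\<^sub>R z i) + 0)) *\<^sub>R (sg i *\<^sub>R z i) = ((y i - mu (sg i * (\<theta> \<bullet> z i))) * sg i) *\<^sub>R z i"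
      by simp
    show "((\<lambda>t. ell (y i) (sg i * (t \<bullet> z i))) has_derivative (\<lambda>h. h \<bullet> (((y i - mu (sg i * (\<theta> \<bullet> z i))) * sg i) *\<^sub>R z i))) (at \<theta>)"
      unfolding e1 e2[symmetric] by (rule ell_affine_deriv)
  qed
  then show ?thesis unfolding Ln_ell z_def sg_def by (rule grad_eq)
qed

lemma grad_gamma:
  "grad (\<lambda>g. Ln n x s a0 a1 y phi psi0 psi \<theta> g) \<gamma> =
     - (1 / real n) *\<^sub>R (\<Sum>i<n. ((y i - mu (sigma psi0 psi \<gamma> (x i) * (\<theta> \<bullet> (phi (s i) (a1 i) - phi (s i) (a0 i)))))
        * (\<theta> \<bullet> (phi (s i) (a1 i) - phi (s i) (a0 i)))) *\<^sub>R psi (x i))"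
proof -
  define w where "w i = \<theta> \<bullet> (phi (s i) (a1 i) - phi (s i) (a0 i))" for i
  have "GDERIV (\<lambda>g. - (1 / real n) * (\<Sum>i<n. ell (y i) (sigma psi0 psi g (x i) * w i))) \<gamma> :>
      - (1 / real n) *\<^sub>R (\<Sum>i<n. ((y i - mu (sigma psi0 psi \<gamma> (x i) * w i)) * w i) *\<^sub>R psi (x i))"
  proof (rule sum_grad)
    fix i
    have e1: "(\<lambda>g. ell (y i) (sigma psi0 psi g (x i) * w i)) = (\<lambda>g. ell (y i) (g \<bullet> (w i *\<^sub>R psi (x i)) + psi0 (x i) * w i))"
      by (simp add: sigma_def algebra_simps)
    have e2: "(y i - mu (\<gamma> \<bullet> (w i *\<^sub>R psi (x i)) + psi0 (x i) * w i)) *\<^sub>R (w i *\<^sub>R psi (x i)) = ((y i - mu (sigma psi0 psi \<gamma> (x i) * w i)) * w i) *\<^sub>R psi (x i)"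
      by (simp add: sigma_def algebra_simps)
    show "((\<lambda>g. ell (y i) (sigma psi0 psi g (x i) * w i)) has_derivative (\<lambda>h. h \<bullet> (((y i - mu (sigma psi0 psi \<gamma> (x i) * w i)) * w i) *\<^sub>R psi (x i)))) (at \<gamma>)"
      unfolding e1 e2[symmetric] by (rule ell_affine_deriv)
  qed
  then show ?thesis unfolding Ln_ell w_def by (rule grad_eq)
qed


lemma AL:
  fixes phi psi r c0 T G M S :: real
  assumes ph: "0 \<le> phi" and ps: "0 \<le> psi" and r0: "0 \<le> r" and cr: "c0\<^sup>2 + r\<^sup>2 \<le> psi\<^sup>2"
    and T0: "0 \<le> T" and G0: "0 \<le> G" and M1: "1 \<le> M" and GM: "G \<le> M" and TMS: "T * M \<le> S"
  shows "2 * phi * r * (1 + (\<bar>c0\<bar> + G * r) * (2 * phi * T) / 5) \<le> phi * psi * (2 + S * phi * psi)"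
proof -
  have "0 \<le> c0\<^sup>2" by simp
  then have "r\<^sup>2 \<le> psi\<^sup>2" using cr by linarith
  then have rp: "r \<le> psi" using ps by (rule power2_le_imp_le)
  have h1: "r * \<bar>c0\<bar> \<le> c0\<^sup>2 + r\<^sup>2 / 4"
  proof -
    have "0 \<le> (\<bar>c0\<bar> - r/2)\<^sup>2" by simp
    also have "\<dots> = c0\<^sup>2 - r * \<bar>c0\<bar> + r\<^sup>2/4" by (simp add: power2_eq_square algebra_simps)
    finally show ?thesis by simp
  qed
  have c2: "0 \<le> c0\<^sup>2" and r2: "0 \<le> r\<^sup>2" by simp_all
  have h2: "1 * c0\<^sup>2 \<le> 5/4 * M * c0\<^sup>2" using M1 c2 by (intro mult_right_mono) auto
  have h2': "(G + 1/4) * r\<^sup>2 \<le> (5/4 * M) * r\<^sup>2" using GM M1 r2 by (intro mult_right_mono) auto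
  have h3: "r * \<bar>c0\<bar> + G * r\<^sup>2 \<le> 5/4 * M * psi\<^sup>2"
  proof -
    have "r * \<bar>c0\<bar> + G * r\<^sup>2 \<le> c0\<^sup>2 + (G + 1/4) * r\<^sup>2" using h1 by (simp add: algebra_simps)
    also have "\<dots> \<le> 5/4 * M * c0\<^sup>2 + (5/4 * M) * r\<^sup>2" using h2 h2' by linarith
    also have "\<dots> = 5/4 * M * (c0\<^sup>2 + r\<^sup>2)" by (simp add: algebra_simps)
    also have "\<dots> \<le> 5/4 * M * psi\<^sup>2" using cr M1 by (intro mult_left_mono) auto
    finally show ?thesis .
  qed
  have h4: "4/5 * T * (r * \<bar>c0\<bar> + G * r\<^sup>2) \<le> S * psi\<^sup>2"
  proof -
    have "4/5 * T * (r * \<bar>c0\<bar> + G * r\<^sup>2) \<le> 4/5 * T * (5/4 * M * psi\<^sup>2)"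
      using h3 T0 by (intro mult_left_mono) auto
    also have "\<dots> = (T * M) * psi\<^sup>2" by (simp add: algebra_simps)
    also have "\<dots> \<le> S * psi\<^sup>2" using TMS by (intro mult_right_mono) auto
    finally show ?thesis .
  qed
  have h5: "phi\<^sup>2 * (4/5 * T * (r * \<bar>c0\<bar> + G * r\<^sup>2)) \<le> phi\<^sup>2 * (S * psi\<^sup>2)"
    using h4 by (intro mult_left_mono) auto
  have h6: "2 * phi * r \<le> 2 * phi * psi" using rp ph by (intro mult_left_mono) auto
  have "2 * phi * r * (1 + (\<bar>c0\<bar> + G * r) * (2 * phi * T) / 5) = 2 * phi * r + phi\<^sup>2 * (4/5 * T * (r * \<bar>c0\<bar> + G * r\<^sup>2))"
    by (simp add: power2_eq_square algebra_simps)
  also have "\<dots> \<le> 2 * phi * psi + phi\<^sup>2 * (S * psi\<^sup>2)" using h5 h6 by linarith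
  also have "\<dots> = phi * psi * (2 + S * phi * psi)" by (simp add: power2_eq_square algebra_simps)
  finally show ?thesis .
qed

lemma chain_bound:
  fixes E al A be Bb de D1 nv N :: real
  assumes "\<bar>E\<bar> \<le> (1 + al * be / 5) * de" "0 \<le> al" "al \<le> A" "0 \<le> be" "be \<le> Bb"
    "0 \<le> de" "de \<le> D1" "0 \<le> nv" "nv \<le> N"
  shows "\<bar>E\<bar> * nv \<le> (1 + A * Bb / 5) * D1 * N"
proof -
  have "al * be \<le> A * Bb" using assms by (intro mult_mono) auto
  then have k: "1 + al * be / 5 \<le> 1 + A * Bb / 5" by simp
  have nn: "0 \<le> 1 + al * be / 5" using assms by simp
  have "(1 + al * be / 5) * de \<le> (1 + A * Bb / 5) * D1" using k nn assms by (intro mult_mono) auto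
  then have "\<bar>E\<bar> \<le> (1 + A * Bb / 5) * D1" using assms(1) by linarith
  then show ?thesis using assms by (intro mult_mono) auto
qed

lemma norm_avg:
  fixes V :: "nat \<Rightarrow> 'v::real_normed_vector"
  assumes "\<And>i. i < n \<Longrightarrow> norm (V i) \<le> B" and "0 \<le> B"
  shows "norm (- (1 / real n) *\<^sub>R (\<Sum>i<n. V i)) \<le> B"
proof (cases "n = 0")
  case True then show ?thesis using assms by simp
next
  case False
  then have np: "real n > 0" by simp
  have "norm (- (1 / real n) *\<^sub>R (\<Sum>i<n. V i)) = (1 / real n) * norm (\<Sum>i<n. V i)" by simp
  also have "\<dots> \<le> (1 / real n) * (\<Sum>i<n. norm (V i))" using np by (intro mult_left_mono norm_sum) auto
  also have "\<dots> \<le> (1 / real n) * (\<Sum>i<n. B)" using np assms by (intro mult_left_mono sum_mono) auto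
  also have "\<dots> = B" using np by simp
  finally show ?thesis .
qed



theorem lemmaS5:
  fixes n :: nat
    and x :: "nat \<Rightarrow> 'x" and s :: "nat \<Rightarrow> 's" and a0 a1 :: "nat \<Rightarrow> 'a"
    and y :: "nat \<Rightarrow> real"
    and phi :: "'s \<Rightarrow> 'a \<Rightarrow> real ^ 'd1"
    and psi0 :: "'x \<Rightarrow> real" and psi :: "'x \<Rightarrow> real ^ 'd2"
    and phimax psimax thetamax gammamax b :: real
    and theta_s :: "real ^ 'd1" and gamma_s :: "real ^ 'd2"
  assumes b: "b \<ge> 0"
    and y01: "\<forall>i<n. y i \<in> {0, 1}"
    and A1_phi: "\<forall>st ac. norm (phi st ac) \<le> phimax"
    and A1_theta: "theta_s \<in> Theta thetamax"
    and A2_psi0: "\<exists>xx. psi0 xx \<noteq> 0"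
    and A2_psi: "\<forall>xx. sqrt ((psi0 xx)\<^sup>2 + (norm (psi xx))\<^sup>2) \<le> psimax"
    and A2_gamma: "gamma_s \<in> Gamma gammamax"
  shows "let L = Ln n x s a0 a1 y phi psi0 psi;
             d1 = real CARD('d1); d2 = real CARD('d2);
             Mt = phimax * psimax * (2 + (b * max (sqrt d1 * thetamax) (sqrt d2 * gammamax) / sqrt 2
                    + sqrt (d1 * d2) * gammamax * thetamax) * phimax * psimax)
         in (\<forall>\<theta> \<gamma> \<gamma>'. norm (\<theta> - theta_s) \<le> b / sqrt 2 \<and> \<gamma>' \<in> Gamma gammamax \<longrightarrow>
               norm (grad (\<lambda>t. L t \<gamma>) \<theta> - grad (\<lambda>t. L t \<gamma>') \<theta>) \<le> Mt * norm (\<gamma> - \<gamma>'))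
          \<and> (\<forall>\<gamma> \<theta> \<theta>'. norm (\<gamma> - gamma_s) \<le> b / sqrt 2 \<and> \<theta>' \<in> Theta thetamax \<longrightarrow>
               norm (grad (\<lambda>g. L \<theta> g) \<gamma> - grad (\<lambda>g. L \<theta>' g) \<gamma>) \<le> Mt * norm (\<theta> - \<theta>'))"
proof -
  define d1 where "d1 = real CARD('d1)"
  define d2 where "d2 = real CARD('d2)"
  define S where "S = b * max (sqrt d1 * thetamax) (sqrt d2 * gammamax) / sqrt 2 + sqrt (d1 * d2) * gammamax * thetamax"
  define Mt where "Mt = phimax * psimax * (2 + S * phimax * psimax)"
  define zz where "zz i = phi (s i) (a1 i) - phi (s i) (a0 i)" for i
  define sg where "sg g i = sigma psi0 psi g (x i)" for g i
  have d1g: "sqrt d1 \<ge> 1" unfolding d1_def by simp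
  have d2g: "sqrt d2 \<ge> 1" unfolding d2_def by simp
  have ph0: "0 \<le> phimax" using A1_phi norm_ge_zero order_trans by blast
  have zb: "norm (zz i) \<le> 2 * phimax" for i
  proof -
    have "norm (zz i) \<le> norm (phi (s i) (a1 i)) + norm (phi (s i) (a0 i))" unfolding zz_def by (rule norm_triangle_ineq4)
    then show ?thesis using A1_phi by (smt (verit))
  qed
  have psb: "(psi0 xx)\<^sup>2 + (norm (psi xx))\<^sup>2 \<le> psimax\<^sup>2" for xx
    using A2_psi sqrt_le_D by blast
  have ps0: "0 \<le> psimax" using A2_psi real_sqrt_ge_zero order_trans by (metis add_nonneg_nonneg zero_le_power2)
  have tsup: "supnorm theta_s \<le> thetamax" using A1_theta unfolding Theta_def by simp
  have tm0: "0 \<le> thetamax" using tsup supnorm_nonneg[of theta_s] by linarith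
  have gsup: "max 1 (supnorm gamma_s) \<le> gammamax" using A2_gamma unfolding Gamma_def by simp
  have gm1: "1 \<le> gammamax" using gsup by simp
  have nts: "norm theta_s \<le> sqrt d1 * thetamax"
    using norm_le_supnorm[of theta_s] tsup d1g unfolding d1_def
    by (smt (verit) mult_left_mono real_sqrt_ge_zero of_nat_0_le_iff)
  have nG: "norm g \<le> sqrt d2 * gammamax" if "g \<in> Gamma gammamax" for g :: "real ^ 'd2"
  proof -
    have "supnorm g \<le> gammamax" using that unfolding Gamma_def by simp
    then show ?thesis using norm_le_supnorm[of g] d2g unfolding d2_def
      by (smt (verit) mult_left_mono real_sqrt_ge_zero of_nat_0_le_iff)
  qed
  have nT: "norm t \<le> sqrt d1 * thetamax" if "t \<in> Theta thetamax" for t :: "real ^ 'd1"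
  proof -
    have "supnorm t \<le> thetamax" using that unfolding Theta_def by simp
    then show ?thesis using norm_le_supnorm[of t] d1g unfolding d1_def
      by (smt (verit) mult_left_mono real_sqrt_ge_zero of_nat_0_le_iff)
  qed
  have sq2: "sqrt 2 > 0" by simp
  have sqm: "sqrt (d1 * d2) = sqrt d1 * sqrt d2" by (rule real_sqrt_mult)
  have Mt0: "0 \<le> Mt" if "T * M \<le> S" "0 \<le> T" "1 \<le> M" for T M
  proof -
    have M0: "0 \<le> M" using that(3) by simp
    show ?thesis using AL[OF ph0 ps0 order_refl _ that(2) order_refl that(3) M0 that(1), of 0] unfolding Mt_def by simp
  qed
  have P1: "\<forall>\<theta> \<gamma> \<gamma>'. norm (\<theta> - theta_s) \<le> b / sqrt 2 \<and> \<gamma>' \<in> Gamma gammamax \<longrightarrow>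
               norm (grad (\<lambda>t. Ln n x s a0 a1 y phi psi0 psi t \<gamma>) \<theta> - grad (\<lambda>t. Ln n x s a0 a1 y phi psi0 psi t \<gamma>') \<theta>) \<le> Mt * norm (\<gamma> - \<gamma>')"
  proof (intro allI impI)
    fix \<theta> :: "real ^ 'd1" and \<gamma> \<gamma>' :: "real ^ 'd2"
    assume H: "norm (\<theta> - theta_s) \<le> b / sqrt 2 \<and> \<gamma>' \<in> Gamma gammamax"
    define T where "T = norm \<theta>"
    define G where "G = norm \<gamma>'"
    define M where "M = sqrt d2 * gammamax"
    have T0: "0 \<le> T" unfolding T_def by simp
    have G0: "0 \<le> G" unfolding G_def by simp
    have M1: "1 \<le> M" unfolding M_def using mult_mono[of 1 "sqrt d2" 1 gammamax] d2g gm1 by simp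
    have GM: "G \<le> M" unfolding G_def M_def using nG H by blast
    have Tb: "T \<le> sqrt d1 * thetamax + b / sqrt 2"
      using norm_triangle_ineq[of theta_s "\<theta> - theta_s"] nts H unfolding T_def by simp
    have TMS: "T * M \<le> S"
    proof -
      have "T * M \<le> (sqrt d1 * thetamax + b / sqrt 2) * M" using Tb M1 by (intro mult_right_mono) auto
      also have "\<dots> = sqrt (d1 * d2) * gammamax * thetamax + b * (sqrt d2 * gammamax) / sqrt 2"
        unfolding M_def sqm by (simp add: algebra_simps)
      also have "\<dots> \<le> S" unfolding S_def using b sq2
        by (simp add: divide_right_mono mult_left_mono)
      finally show ?thesis .
    qed
    have Mt0': "0 \<le> Mt * norm (\<gamma> - \<gamma>')" using Mt0[OF TMS T0 M1] by simp
    have AL1: "2 * phimax * r * (1 + (\<bar>c0\<bar> + G * r) * (2 * phimax * T) / 5) \<le> Mt"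
      if "c0\<^sup>2 + r\<^sup>2 \<le> psimax\<^sup>2" "0 \<le> r" for c0 r
      using AL[OF ph0 ps0 that(2) that(1) T0 G0 M1 GM TMS] unfolding Mt_def .
    show "norm (grad (\<lambda>t. Ln n x s a0 a1 y phi psi0 psi t \<gamma>) \<theta> - grad (\<lambda>t. Ln n x s a0 a1 y phi psi0 psi t \<gamma>') \<theta>) \<le> Mt * norm (\<gamma> - \<gamma>')"
      unfolding grad_theta scaleR_diff_right[symmetric] sum_subtractf[symmetric]
    proof (rule norm_avg[OF _ Mt0'])
      fix i assume i: "i < n"
      define z where "z = zz i"
      define w where "w = \<theta> \<bullet> z"
      define c where "c = sg \<gamma> i"
      define c' where "c' = sg \<gamma>' i"
      define c0 where "c0 = psi0 (x i)"
      define r where "r = norm (psi (x i))"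
      define E where "E = (y i - mu (c * w)) * c - (y i - mu (c' * w)) * c'"
      have yi: "y i \<in> {0, 1}" using y01 i by simp
      have r0: "0 \<le> r" unfolding r_def by simp
      have cr: "c0\<^sup>2 + r\<^sup>2 \<le> psimax\<^sup>2" unfolding c0_def r_def by (rule psb)
      have L: "\<bar>E\<bar> \<le> (1 + \<bar>c'\<bar> * \<bar>w\<bar> / 5) * \<bar>c - c'\<bar>" unfolding E_def by (rule scal_lip[OF yi])
      have b1: "\<bar>c'\<bar> \<le> \<bar>c0\<bar> + G * r"
      proof -
        have "\<bar>\<gamma>' \<bullet> psi (x i)\<bar> \<le> G * r" unfolding G_def r_def by (rule Cauchy_Schwarz_ineq2)
        then show ?thesis unfolding c'_def sg_def sigma_def c0_def by linarith
      qed
      have b2: "\<bar>w\<bar> \<le> T * (2 * phimax)"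
      proof -
        have "\<bar>w\<bar> \<le> norm \<theta> * norm z" unfolding w_def by (rule Cauchy_Schwarz_ineq2)
        also have "\<dots> \<le> T * (2 * phimax)" unfolding T_def z_def using zb T0[unfolded T_def] by (intro mult_left_mono) auto
        finally show ?thesis .
      qed
      have b3: "\<bar>c - c'\<bar> \<le> r * norm (\<gamma> - \<gamma>')"
      proof -
        have "c - c' = (\<gamma> - \<gamma>') \<bullet> psi (x i)" unfolding c_def c'_def sg_def sigma_def by (simp add: inner_diff_left)
        then have "\<bar>c - c'\<bar> \<le> norm (\<gamma> - \<gamma>') * r" unfolding r_def using Cauchy_Schwarz_ineq2 by metis
        then show ?thesis by (simp add: mult.commute)
      qed
      have "\<bar>E\<bar> * norm z \<le> (1 + (\<bar>c0\<bar> + G * r) * (T * (2 * phimax)) / 5) * (r * norm (\<gamma> - \<gamma>')) * (2 * phimax)"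
        by (rule chain_bound[OF L]) (use b1 b2 b3 zb[of i] in \<open>auto simp: z_def\<close>)
      also have "\<dots> = (2 * phimax * r * (1 + (\<bar>c0\<bar> + G * r) * (2 * phimax * T) / 5)) * norm (\<gamma> - \<gamma>')"
        by (simp add: algebra_simps)
      also have "\<dots> \<le> Mt * norm (\<gamma> - \<gamma>')" using AL1[OF cr r0] by (intro mult_right_mono) auto
      finally have fin: "\<bar>E\<bar> * norm z \<le> Mt * norm (\<gamma> - \<gamma>')" .
      have "((y i - mu (sigma psi0 psi \<gamma> (x i) * (\<theta> \<bullet> (phi (s i) (a1 i) - phi (s i) (a0 i))))) * sigma psi0 psi \<gamma> (x i)) *\<^sub>R
              (phi (s i) (a1 i) - phi (s i) (a0 i)) -
            ((y i - mu (sigma psi0 psi \<gamma>' (x i) * (\<theta> \<bullet> (phi (s i) (a1 i) - phi (s i) (a0 i))))) * sigma psi0 psi \<gamma>' (x i)) *\<^sub>R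
              (phi (s i) (a1 i) - phi (s i) (a0 i)) = E *\<^sub>R z"
        unfolding E_def z_def zz_def w_def c_def c'_def sg_def by (simp add: scaleR_diff_left)
      then show "norm (((y i - mu (sigma psi0 psi \<gamma> (x i) * (\<theta> \<bullet> (phi (s i) (a1 i) - phi (s i) (a0 i))))) * sigma psi0 psi \<gamma> (x i)) *\<^sub>R
              (phi (s i) (a1 i) - phi (s i) (a0 i)) -
            ((y i - mu (sigma psi0 psi \<gamma>' (x i) * (\<theta> \<bullet> (phi (s i) (a1 i) - phi (s i) (a0 i))))) * sigma psi0 psi \<gamma>' (x i)) *\<^sub>R
              (phi (s i) (a1 i) - phi (s i) (a0 i))) \<le> Mt * norm (\<gamma> - \<gamma>')"
        using fin by simp
    qed
  qed
  have P2: "\<forall>\<gamma> \<theta> \<theta>'. norm (\<gamma> - gamma_s) \<le> b / sqrt 2 \<and> \<theta>' \<in> Theta thetamax \<longrightarrow>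
               norm (grad (\<lambda>g. Ln n x s a0 a1 y phi psi0 psi \<theta> g) \<gamma> - grad (\<lambda>g. Ln n x s a0 a1 y phi psi0 psi \<theta>' g) \<gamma>) \<le> Mt * norm (\<theta> - \<theta>')"
  proof (intro allI impI)
    fix \<theta> \<theta>' :: "real ^ 'd1" and \<gamma> :: "real ^ 'd2"
    assume H: "norm (\<gamma> - gamma_s) \<le> b / sqrt 2 \<and> \<theta>' \<in> Theta thetamax"
    define T where "T = norm \<theta>'"
    define G where "G = norm \<gamma>"
    define M where "M = sqrt d2 * gammamax + b / sqrt 2"
    have T0: "0 \<le> T" unfolding T_def by simp
    have G0: "0 \<le> G" unfolding G_def by simp
    have M1: "1 \<le> M"
    proof -
      have "1 \<le> sqrt d2 * gammamax" using mult_mono[of 1 "sqrt d2" 1 gammamax] d2g gm1 by simp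
      moreover have "0 \<le> b / sqrt 2" using b by simp
      ultimately show ?thesis unfolding M_def by linarith
    qed
    have ngs: "norm gamma_s \<le> sqrt d2 * gammamax" using nG A2_gamma by blast
    have GM: "G \<le> M"
      using norm_triangle_ineq[of gamma_s "\<gamma> - gamma_s"] ngs H unfolding G_def M_def by simp
    have Tb: "T \<le> sqrt d1 * thetamax" unfolding T_def using nT H by blast
    have TMS: "T * M \<le> S"
    proof -
      have "T * M \<le> (sqrt d1 * thetamax) * M" using Tb M1 by (intro mult_right_mono) auto
      also have "\<dots> = sqrt (d1 * d2) * gammamax * thetamax + b * (sqrt d1 * thetamax) / sqrt 2"
        unfolding M_def sqm by (simp add: algebra_simps)
      also have "\<dots> \<le> S" unfolding S_def using b sq2
        by (simp add: divide_right_mono mult_left_mono)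
      finally show ?thesis .
    qed
    have Mt0': "0 \<le> Mt * norm (\<theta> - \<theta>')" using Mt0[OF TMS T0 M1] by simp
    have AL1: "2 * phimax * r * (1 + (\<bar>c0\<bar> + G * r) * (2 * phimax * T) / 5) \<le> Mt"
      if "c0\<^sup>2 + r\<^sup>2 \<le> psimax\<^sup>2" "0 \<le> r" for c0 r
      using AL[OF ph0 ps0 that(2) that(1) T0 G0 M1 GM TMS] unfolding Mt_def .
    show "norm (grad (\<lambda>g. Ln n x s a0 a1 y phi psi0 psi \<theta> g) \<gamma> - grad (\<lambda>g. Ln n x s a0 a1 y phi psi0 psi \<theta>' g) \<gamma>) \<le> Mt * norm (\<theta> - \<theta>')"
      unfolding grad_gamma scaleR_diff_right[symmetric] sum_subtractf[symmetric]
    proof (rule norm_avg[OF _ Mt0'])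
      fix i assume i: "i < n"
      define z where "z = zz i"
      define w where "w = \<theta> \<bullet> z"
      define w' where "w' = \<theta>' \<bullet> z"
      define c where "c = sg \<gamma> i"
      define c0 where "c0 = psi0 (x i)"
      define r where "r = norm (psi (x i))"
      define E where "E = (y i - mu (c * w)) * w - (y i - mu (c * w')) * w'"
      have yi: "y i \<in> {0, 1}" using y01 i by simp
      have r0: "0 \<le> r" unfolding r_def by simp
      have cr: "c0\<^sup>2 + r\<^sup>2 \<le> psimax\<^sup>2" unfolding c0_def r_def by (rule psb)
      have Eq: "E = (y i - mu (w * c)) * w - (y i - mu (w' * c)) * w'"
        unfolding E_def by (simp only: mult.commute[of c w] mult.commute[of c w'])
      have L: "\<bar>E\<bar> \<le> (1 + \<bar>w'\<bar> * \<bar>c\<bar> / 5) * \<bar>w - w'\<bar>" unfolding Eq by (rule scal_lip[OF yi])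
      have b1: "\<bar>c\<bar> \<le> \<bar>c0\<bar> + G * r"
      proof -
        have "\<bar>\<gamma> \<bullet> psi (x i)\<bar> \<le> G * r" unfolding G_def r_def by (rule Cauchy_Schwarz_ineq2)
        then show ?thesis unfolding c_def sg_def sigma_def c0_def by linarith
      qed
      have b2: "\<bar>w'\<bar> \<le> T * (2 * phimax)"
      proof -
        have "\<bar>w'\<bar> \<le> norm \<theta>' * norm z" unfolding w'_def by (rule Cauchy_Schwarz_ineq2)
        also have "\<dots> \<le> T * (2 * phimax)" unfolding T_def z_def using zb T0[unfolded T_def] by (intro mult_left_mono) auto
        finally show ?thesis .
      qed
      have b3: "\<bar>w - w'\<bar> \<le> norm (\<theta> - \<theta>') * (2 * phimax)"
      proof -
        have "w - w' = (\<theta> - \<theta>') \<bullet> z" unfolding w_def w'_def by (simp add: inner_diff_left)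
        then have "\<bar>w - w'\<bar> \<le> norm (\<theta> - \<theta>') * norm z" using Cauchy_Schwarz_ineq2 by metis
        also have "\<dots> \<le> norm (\<theta> - \<theta>') * (2 * phimax)" unfolding z_def using zb by (intro mult_left_mono) auto
        finally show ?thesis .
      qed
      have "\<bar>E\<bar> * r \<le> (1 + (T * (2 * phimax)) * (\<bar>c0\<bar> + G * r) / 5) * (norm (\<theta> - \<theta>') * (2 * phimax)) * r"
        by (rule chain_bound[OF L]) (use b1 b2 b3 r0 in auto)
      also have "\<dots> = (2 * phimax * r * (1 + (\<bar>c0\<bar> + G * r) * (2 * phimax * T) / 5)) * norm (\<theta> - \<theta>')"
        by (simp add: algebra_simps)
      also have "\<dots> \<le> Mt * norm (\<theta> - \<theta>')" using AL1[OF cr r0] by (intro mult_right_mono) auto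
      finally have fin: "\<bar>E\<bar> * r \<le> Mt * norm (\<theta> - \<theta>')" .
      have "((y i - mu (sigma psi0 psi \<gamma> (x i) * (\<theta> \<bullet> (phi (s i) (a1 i) - phi (s i) (a0 i))))) * (\<theta> \<bullet> (phi (s i) (a1 i) - phi (s i) (a0 i)))) *\<^sub>R psi (x i) -
            ((y i - mu (sigma psi0 psi \<gamma> (x i) * (\<theta>' \<bullet> (phi (s i) (a1 i) - phi (s i) (a0 i))))) * (\<theta>' \<bullet> (phi (s i) (a1 i) - phi (s i) (a0 i)))) *\<^sub>R psi (x i)
            = E *\<^sub>R psi (x i)"
        unfolding E_def z_def zz_def w_def w'_def c_def sg_def by (simp add: scaleR_diff_left)
      then show "norm (((y i - mu (sigma psi0 psi \<gamma> (x i) * (\<theta> \<bullet> (phi (s i) (a1 i) - phi (s i) (a0 i))))) * (\<theta> \<bullet> (phi (s i) (a1 i) - phi (s i) (a0 i)))) *\<^sub>R psi (x i) -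
            ((y i - mu (sigma psi0 psi \<gamma> (x i) * (\<theta>' \<bullet> (phi (s i) (a1 i) - phi (s i) (a0 i))))) * (\<theta>' \<bullet> (phi (s i) (a1 i) - phi (s i) (a0 i)))) *\<^sub>R psi (x i))
            \<le> Mt * norm (\<theta> - \<theta>')"
        using fin unfolding r_def by simp
    qed
  qed
  show ?thesis unfolding Let_def using conjI[OF P1 P2] unfolding Mt_def S_def d1_def d2_def .
qed

end
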